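(* For $n\ge 4$ let $R_n$ be the tree obtained from the star $S_{n-1}$ by adding a new vertex adjacent to one leaf of $S_{n-1}$. Then $$av_1(R_n)=\frac{5n-13+(n+1)2^{n-4}}{2n-5+2^{n-3}}=\frac{n+1}{2}-\frac{n^2-\tfrac{13}{2}n+\tfrac{21}{2}}{2n-5+2^{n-3}}=\frac n2+\frac{2^{n-4}-n^2+\tfrac{15}{2}n-13}{2n-5+2^{n-3}}.$$ Consequently $av_1(R_n)<\frac{n+1}{2}$ for all $n\ge4$, $av_1(R_n)>\frac n2$ for all $n\ge 4$ with $n\notin\{6,7,8\}$, and $\lim_{n\to\infty}\big(av_1(R_n)-\frac{n+1}{2}\big)=0$.
   Context: For a graph $G=(V,E)$, a set $S\subseteq V$ is a $1$-nearly independent vertex set if the subgraph induced by $S$ has exactly one edge. $\sigma_1(G)$ is the number of such sets, $S_1(G)$ the sum of their sizes, and $av_1(G)=S_1(G)/\sigma_1(G)$. $S_m$ denotes the star on $m$ vertices. *)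

theory Defs
  imports Complex_Main
begin

definition simple_graph :: "'a set \<Rightarrow> 'a set set \<Rightarrow> bool" where
  "simple_graph V E \<longleftrightarrow> finite V \<and> (\<forall>e\<in>E. e \<subseteq> V \<and> card e = 2)"

definition induced_edges :: "'a set set \<Rightarrow> 'a set \<Rightarrow> 'a set set" where
  "induced_edges E S = {e \<in> E. e \<subseteq> S}"

definition nearly_indep_sets1 :: "'a set \<Rightarrow> 'a set set \<Rightarrow> 'a set set" where
  "nearly_indep_sets1 V E = {S. S \<subseteq> V \<and> card (induced_edges E S) = 1}"

definition sigma1 :: "'a set \<Rightarrow> 'a set set \<Rightarrow> nat" where
  "sigma1 V E = card (nearly_indep_sets1 V E)"

definition S1 :: "'a set \<Rightarrow> 'a set set \<Rightarrow> nat" where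
  "S1 V E = (\<Sum>S\<in>nearly_indep_sets1 V E. card S)"

definition av1 :: "'a set \<Rightarrow> 'a set set \<Rightarrow> real" where
  "av1 V E = real (S1 V E) / real (sigma1 V E)"

text \<open>The tree R_n: star S_{n-1} with centre 0 and leaves 1..n-2,
  plus a new vertex n-1 adjacent to the leaf 1.\<close>
definition R_vertices :: "nat \<Rightarrow> nat set" where
  "R_vertices n = {0..<n}"

definition R_edges :: "nat \<Rightarrow> nat set set" where
  "R_edges n = {{0, i} | i. 1 \<le> i \<and> i \<le> n - 2} \<union> {{1, n - 1}}"

end

theory Submission imports Defs begin



lemma sum_card_Pow2: "finite A \<Longrightarrow> 2 * (\<Sum>T\<in>Pow A. card T) = card A * 2 ^ card A"
proof (induction A rule: finite_induct)
  case empty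
  then show ?case by simp
next
  case (insert x A)
  have d: "Pow A \<inter> insert x ` Pow A = {}" using insert by auto
  have inj: "inj_on (insert x) (Pow A)" using insert unfolding inj_on_def by (metis Pow_iff insert_absorb insert_ident subset_iff)
  have "(\<Sum>T\<in>Pow (insert x A). card T) = (\<Sum>T\<in>Pow A. card T) + (\<Sum>T\<in>insert x ` Pow A. card T)"
    unfolding Pow_insert using insert d by (simp add: sum.union_disjoint)
  also have "(\<Sum>T\<in>insert x ` Pow A. card T) = (\<Sum>T\<in>Pow A. card (insert x T))"
    using inj by (simp add: sum.reindex)
  also have "\<dots> = (\<Sum>T\<in>Pow A. card T + 1)"
    apply (rule sum.cong, simp) using insert by (subst card_insert_disjoint) (auto intro: finite_subset)
  also have "\<dots> = (\<Sum>T\<in>Pow A. card T) + 2 ^ card A" unfolding sum.distrib using insert(1) by (simp add: card_Pow)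
  finally show ?case using insert by (simp add: algebra_simps)
qed

lemma ind_eq: assumes "n \<ge> 4"
  shows "induced_edges (R_edges n) S =
    (if 0 \<in> S then (\<lambda>i. {0,i}) ` ({1..n-2} \<inter> S) else {}) \<union> (if 1 \<in> S \<and> n-1 \<in> S then {{1,n-1}} else {})"
  using assms unfolding induced_edges_def R_edges_def by (auto simp: doubleton_eq_iff)

lemma ind_card: assumes "n \<ge> 4"
  shows "card (induced_edges (R_edges n) S) =
    (if 0 \<in> S then card ({1..n-2} \<inter> S) else 0) + (if 1 \<in> S \<and> n-1 \<in> S then 1 else 0)"
proof -
  have inj: "inj_on (\<lambda>i. {0::nat,i}) ({1..n-2} \<inter> S)" unfolding inj_on_def by (auto simp: doubleton_eq_iff)
  have nin: "{1, n-1} \<notin> (\<lambda>i. {0::nat,i}) ` ({1..n-2} \<inter> S)" using assms by (auto simp: doubleton_eq_iff)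
  show ?thesis unfolding ind_eq[OF assms] using inj nin by (auto simp: card_image)
qed


lemma char: assumes n: "n \<ge> 4"
  shows "nearly_indep_sets1 (R_vertices n) (R_edges n) =
     ((\<lambda>i. {0,i}) ` {2..n-2} \<union> (\<lambda>i. {0,i,n-1}) ` {2..n-2}) \<union> ({{0,1}} \<union> (\<lambda>T. insert 1 (insert (n-1) T)) ` Pow {2..n-2})"
  (is "?N = (?F1 \<union> ?F2) \<union> (?F3 \<union> ?F4)")
proof (rule set_eqI, rule iffI)
  fix S assume "S \<in> ?N"
  then have sub: "S \<subseteq> {0..<n}" and c0: "card (induced_edges (R_edges n) S) = 1"
    unfolding nearly_indep_sets1_def R_vertices_def by simp_all
  have c: "(if 0 \<in> S then card ({1..n-2} \<inter> S) else 0) + (if 1 \<in> S \<and> n-1 \<in> S then 1 else 0) = 1"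
    using c0 unfolding ind_card[OF n] .
  show "S \<in> (?F1 \<union> ?F2) \<union> (?F3 \<union> ?F4)"
  proof (cases "0 \<in> S")
    case True
    have not1v: "\<not> (1 \<in> S \<and> n-1 \<in> S)"
    proof
      assume h: "1 \<in> S \<and> n-1 \<in> S"
      then have "card ({1..n-2} \<inter> S) = 0" using c True by simp
      moreover have "1 \<in> {1..n-2} \<inter> S" using h n by auto
      ultimately show False by (metis card_0_eq empty_iff finite_Int finite_atLeastAtMost)
    qed
    then have z: "(if 1 \<in> S \<and> n-1 \<in> S then 1 else 0::nat) = 0" by simp
    have "card ({1..n-2} \<inter> S) = 1" using c True by (simp only: z if_True add_0_right)
    then obtain i where i: "{1..n-2} \<inter> S = {i}" by (auto simp: card_1_singleton_iff)
    have iS: "i \<in> S" "1 \<le> i" "i \<le> n-2" using i by auto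
    have Sform: "S \<subseteq> {0, i, n-1}"
    proof
      fix x assume x: "x \<in> S"
      then have "x < n" using sub by auto
      then have "x = 0 \<or> (1 \<le> x \<and> x \<le> n-2) \<or> x = n-1" by linarith
      moreover have "1 \<le> x \<and> x \<le> n-2 \<Longrightarrow> x = i"
      proof -
        assume "1 \<le> x \<and> x \<le> n-2"
        then have "x \<in> {1..n-2} \<inter> S" using x by simp
        then show "x = i" using i by blast
      qed
      ultimately show "x \<in> {0,i,n-1}" by blast
    qed
    show ?thesis
    proof (cases "i = 1")
      case True
      then have "n-1 \<notin> S" using not1v iS by auto
      then have "S = {0,1}" using Sform iS \<open>0 \<in> S\<close> True by blast
      then show ?thesis by simp
    next
      case False
      then have iL: "i \<in> {2..n-2}" using iS by auto
      show ?thesis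
      proof (cases "n-1 \<in> S")
        case True
        then have "S = {0,i,n-1}" using Sform iS \<open>0 \<in> S\<close> by blast
        then show ?thesis using iL by blast
      next
        case False
        then have "S = {0,i}" using Sform iS \<open>0 \<in> S\<close> by blast
        then show ?thesis using iL by blast
      qed
    qed
  next
    case False
    then have h0: "(if 1 \<in> S \<and> n-1 \<in> S then 1 else 0::nat) = 1" using c by simp
    then have h: "1 \<in> S" "n-1 \<in> S" by (metis zero_neq_one)+
    have "S - {1, n-1} \<subseteq> {2..n-2}"
    proof
      fix x assume x: "x \<in> S - {1, n-1}"
      then have "x < n" "x \<noteq> 1" "x \<noteq> n-1" using sub by auto
      moreover have "x \<noteq> 0" using x False by (metis DiffD1)
      ultimately show "x \<in> {2..n-2}" unfolding atLeastAtMost_iff by linarith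
    qed
    moreover have "S = insert 1 (insert (n-1) (S - {1, n-1}))" using h by auto
    ultimately show ?thesis by blast
  qed
next
  fix S assume "S \<in> (?F1 \<union> ?F2) \<union> (?F3 \<union> ?F4)"
  then consider (a) i where "i \<in> {2..n-2}" "S = {0,i}" | (b) i where "i \<in> {2..n-2}" "S = {0,i,n-1}"
    | (c) "S = {0,1}" | (d) T where "T \<subseteq> {2..n-2}" "S = insert 1 (insert (n-1) T)" by blast
  then show "S \<in> ?N"
  proof cases
    case a
    have s: "S \<subseteq> {0..<n}" using a n by auto
    have i: "{1..n-2} \<inter> S = {i}" using a by auto
    have o: "0 \<in> S" using a by simp
    have nn: "\<not> (1 \<in> S \<and> n-1 \<in> S)" using a n by auto
    show ?thesis unfolding nearly_indep_sets1_def R_vertices_def mem_Collect_eq ind_card[OF n] i using s o nn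
      by (simp only: if_True if_False card.empty card_insert_disjoint finite.emptyI empty_iff) simp
  next
    case b
    have s: "S \<subseteq> {0..<n}" using b n by auto
    have i: "{1..n-2} \<inter> S = {i}" using b n by auto
    have o: "0 \<in> S" using b by simp
    have nn: "\<not> (1 \<in> S \<and> n-1 \<in> S)" using b n by auto
    show ?thesis unfolding nearly_indep_sets1_def R_vertices_def mem_Collect_eq ind_card[OF n] i using s o nn
      by (simp only: if_True if_False card.empty card_insert_disjoint finite.emptyI empty_iff) simp
  next
    case c
    have s: "S \<subseteq> {0..<n}" using c n by auto
    have i: "{1..n-2} \<inter> S = {1}" using c n by auto
    have o: "0 \<in> S" using c by simp
    have nn: "\<not> (1 \<in> S \<and> n-1 \<in> S)" using c n by auto
    show ?thesis unfolding nearly_indep_sets1_def R_vertices_def mem_Collect_eq ind_card[OF n] i using s o nn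
      by (simp only: if_True if_False card.empty card_insert_disjoint finite.emptyI empty_iff) simp
  next
    case d
    have o: "0 \<notin> S" using d n by auto
    have "{2..n-2} \<subseteq> {0..<n}" using n by auto
    then have s: "S \<subseteq> {0..<n}" using d n by auto
    have y: "1 \<in> S \<and> n-1 \<in> S" using d by simp
    show ?thesis unfolding nearly_indep_sets1_def R_vertices_def mem_Collect_eq ind_card[OF n] using s o y
      by simp
  qed
qed

lemma counts: "sigma1 (R_vertices (k+4)) (R_edges (k+4)) = 2*k+3+2*2^k \<and>
   S1 (R_vertices (k+4)) (R_edges (k+4)) = 5*k+7+(k+5)*2^k"
proof -
  define L where "L = {2..k+2}"
  define v where "v = k+3"
  define F1 where "F1 = (\<lambda>i. {0::nat,i}) ` L"
  define F2 where "F2 = (\<lambda>i. {0::nat,i,v}) ` L"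
  define F3 where "F3 = {{0::nat,1}}"
  define F4 where "F4 = (\<lambda>T. insert 1 (insert v T)) ` Pow L"
  have N: "nearly_indep_sets1 (R_vertices (k+4)) (R_edges (k+4)) = (F1 \<union> F2) \<union> (F3 \<union> F4)"
  proof -
    have h: "4 \<le> k+4" by simp
    have e: "k+4-2 = k+2" "k+4-1 = k+3" by simp_all
    show ?thesis using char[OF h] unfolding F1_def F2_def F3_def F4_def L_def v_def e .
  qed
  have fL: "finite L" and cL: "card L = k+1" unfolding L_def by auto
  have i1: "inj_on (\<lambda>i. {0::nat,i}) L" unfolding inj_on_def L_def by (auto simp: doubleton_eq_iff)
  have i2: "inj_on (\<lambda>i. {0::nat,i,v}) L"
  proof (rule inj_onI)
    fix i j assume ij: "i \<in> L" "j \<in> L" "{0::nat,i,v} = {0,j,v}"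
    then have "i \<in> {0,j,v}" by blast
    moreover have "i \<noteq> 0" "i \<noteq> v" using ij(1) unfolding L_def v_def by auto
    ultimately show "i = j" by blast
  qed
  have i4: "inj_on (\<lambda>T. insert 1 (insert v T)) (Pow L)"
  proof (rule inj_onI)
    fix T T' assume TT: "T \<in> Pow L" "T' \<in> Pow L" "insert 1 (insert v T) = insert 1 (insert v T')"
    have nL: "1 \<notin> L" "v \<notin> L" unfolding L_def v_def by auto
    have e1: "T = insert 1 (insert v T) - {1, v}" using TT(1) nL by blast
    have e2: "T' = insert 1 (insert v T') - {1, v}" using TT(2) nL by blast
    show "T = T'" using e1 e2 TT(3) by metis
  qed
  have c1: "card F1 = k+1" unfolding F1_def using i1 cL by (simp add: card_image)
  have c2: "card F2 = k+1" unfolding F2_def using i2 cL by (simp add: card_image)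
  have c4: "card F4 = 2^(k+1)" unfolding F4_def using i4 cL fL by (simp add: card_image card_Pow)
  have f1: "finite F1" "finite F2" "finite F3" "finite F4" unfolding F1_def F2_def F3_def F4_def using fL by auto
  have vL: "v \<notin> L" "1 \<notin> L" "v \<noteq> 0" "v \<noteq> 1" unfolding L_def v_def by auto
  have a1: "\<forall>S\<in>F1. v \<notin> S \<and> 1 \<notin> S" unfolding F1_def using vL by auto
  have a2: "\<forall>S\<in>F2. v \<in> S \<and> 1 \<notin> S" unfolding F2_def using vL by auto
  have a3: "\<forall>S\<in>F3. v \<notin> S \<and> 1 \<in> S" unfolding F3_def using vL by auto
  have a4: "\<forall>S\<in>F4. v \<in> S \<and> 1 \<in> S" unfolding F4_def by auto
  have d12: "F1 \<inter> F2 = {}" using a1 a2 by blast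
  have d34: "F3 \<inter> F4 = {}" using a3 a4 by blast
  have d: "(F1 \<union> F2) \<inter> (F3 \<union> F4) = {}" using a1 a2 a3 a4 by blast
  have sg: "card ((F1 \<union> F2) \<union> (F3 \<union> F4)) = 2*k+3+2*2^k"
    using f1 d12 d34 d c1 c2 c4 by (simp add: card_Un_disjoint F3_def)
  have s1: "(\<Sum>S\<in>F1. card S) = 2*(k+1)"
  proof -
    have "(\<Sum>S\<in>F1. card S) = (\<Sum>i\<in>L. card {0::nat,i})" unfolding F1_def using i1 by (simp add: sum.reindex)
    also have "\<dots> = (\<Sum>i\<in>L. 2)" by (rule sum.cong) (auto simp: L_def)
    finally show ?thesis using cL by simp
  qed
  have s2: "(\<Sum>S\<in>F2. card S) = 3*(k+1)"
  proof -
    have "(\<Sum>S\<in>F2. card S) = (\<Sum>i\<in>L. card {0::nat,i,v})" unfolding F2_def using i2 by (simp add: sum.reindex)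
    also have "\<dots> = (\<Sum>i\<in>L. 3)" by (rule sum.cong) (auto simp: L_def v_def)
    finally show ?thesis using cL by simp
  qed
  have s4: "(\<Sum>S\<in>F4. card S) = (k+1)*2^k + 4*2^k"
  proof -
    have "(\<Sum>S\<in>F4. card S) = (\<Sum>T\<in>Pow L. card (insert 1 (insert v T)))" unfolding F4_def using i4 by (simp add: sum.reindex)
    also have "\<dots> = (\<Sum>T\<in>Pow L. card T + 2)"
    proof (rule sum.cong)
      fix T assume "T \<in> Pow L"
      moreover have "1 \<notin> L" "v \<notin> L" unfolding L_def v_def by auto
      ultimately have "1 \<notin> insert v T" "v \<notin> T" "finite T" using fL by (auto intro: finite_subset simp: v_def)
      then show "card (insert 1 (insert v T)) = card T + 2" by simp
    qed simp
    also have "\<dots> = (\<Sum>T\<in>Pow L. card T) + 2 * 2^(k+1)" unfolding sum.distrib using fL cL by (simp add: card_Pow)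
    also have "(\<Sum>T\<in>Pow L. card T) = (k+1)*2^k" using sum_card_Pow2[OF fL] cL by simp
    finally show ?thesis by simp
  qed
  have ss: "(\<Sum>S\<in>(F1 \<union> F2) \<union> (F3 \<union> F4). card S) = 5*k+7+(k+5)*2^k"
    using f1 d12 d34 d s1 s2 s4 by (simp add: sum.union_disjoint F3_def algebra_simps)
  show ?thesis unfolding sigma1_def S1_def N using sg ss by simp
qed


lemma av_k: "av1 (R_vertices (k+4)) (R_edges (k+4)) = (5*real k+7+(real k+5)*2^k)/(2*real k+3+2*2^k)"
  using counts[of k] unfolding av1_def by simp

lemma pow_ge: "k \<ge> 5 \<Longrightarrow> k^2 + k \<le> (2::nat)^k"
proof (induction k rule: dec_induct)
  case base
  then show ?case by simp
next
  case (step k)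
  have e: "(Suc k)^2 + Suc k = k*k + 3*k + 2" by (simp add: power2_eq_square)
  have "5*k \<le> k*k" using step(1) by simp
  moreover have "k+2 \<le> 5*k" using step(1) by simp
  ultimately have h: "k+2 \<le> k*k" by (rule le_trans[rotated])
  have "\<forall>m. k+2 \<le> m \<longrightarrow> m + 3*k + 2 \<le> 2*(m + k)" by arith
  then have "k*k + 3*k + 2 \<le> 2*(k*k + k)" using h by blast
  also have "\<dots> \<le> 2 * 2^k" using step(3) by (simp add: power2_eq_square)
  finally show ?case using e by simp
qed

lemma g_lim: "(\<lambda>m. real m ^ 2 / 2 ^ m) \<longlonglongrightarrow> 0"
proof -
  have a: "(\<lambda>m. real m * (3/4::real) ^ m) \<longlonglongrightarrow> 0" by (rule powser_times_n_limit_0) simp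
  have b: "(\<lambda>m. real m * (2/3::real) ^ m) \<longlonglongrightarrow> 0" by (rule powser_times_n_limit_0) simp
  have "(\<lambda>m. (real m * (3/4::real) ^ m) * (real m * (2/3::real) ^ m)) \<longlonglongrightarrow> 0 * 0"
    by (rule tendsto_mult[OF a b])
  moreover have "\<And>m. (real m * (3/4::real) ^ m) * (real m * (2/3::real) ^ m) = real m ^ 2 / 2 ^ m"
  proof -
    fix m
    have "(3/4::real) ^ m * (2/3) ^ m = (1/2)^m" by (simp add: power_mult_distrib[symmetric])
    then show "(real m * (3/4::real) ^ m) * (real m * (2/3::real) ^ m) = real m ^ 2 / 2 ^ m"
      by (simp add: power2_eq_square power_one_over algebra_simps)
  qed
  ultimately show ?thesis by simp
qed

theorem mainTheorem12:
  shows "(\<forall>n::nat. n \<ge> 4 \<longrightarrow>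
            av1 (R_vertices n) (R_edges n)
              = (5 * real n - 13 + (real n + 1) * 2 ^ (n - 4)) / (2 * real n - 5 + 2 ^ (n - 3))
          \<and> av1 (R_vertices n) (R_edges n)
              = (real n + 1) / 2 - (real n ^ 2 - 13 / 2 * real n + 21 / 2) / (2 * real n - 5 + 2 ^ (n - 3))
          \<and> av1 (R_vertices n) (R_edges n)
              = real n / 2 + (2 ^ (n - 4) - real n ^ 2 + 15 / 2 * real n - 13) / (2 * real n - 5 + 2 ^ (n - 3)))
      \<and> (\<forall>n::nat. n \<ge> 4 \<longrightarrow> av1 (R_vertices n) (R_edges n) < (real n + 1) / 2)
      \<and> (\<forall>n::nat. n \<ge> 4 \<and> n \<notin> {6, 7, 8} \<longrightarrow> av1 (R_vertices n) (R_edges n) > real n / 2)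
      \<and> ((\<lambda>n. av1 (R_vertices n) (R_edges n) - (real n + 1) / 2) \<longlonglongrightarrow> 0)"
proof -
  have P: "av1 (R_vertices n) (R_edges n)
              = (5 * real n - 13 + (real n + 1) * 2 ^ (n - 4)) / (2 * real n - 5 + 2 ^ (n - 3))
          \<and> av1 (R_vertices n) (R_edges n)
              = (real n + 1) / 2 - (real n ^ 2 - 13 / 2 * real n + 21 / 2) / (2 * real n - 5 + 2 ^ (n - 3))
          \<and> av1 (R_vertices n) (R_edges n)
              = real n / 2 + (2 ^ (n - 4) - real n ^ 2 + 15 / 2 * real n - 13) / (2 * real n - 5 + 2 ^ (n - 3))
          \<and> av1 (R_vertices n) (R_edges n) < (real n + 1) / 2
          \<and> (n \<notin> {6, 7, 8} \<longrightarrow> av1 (R_vertices n) (R_edges n) > real n / 2)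
          \<and> \<bar>av1 (R_vertices n) (R_edges n) - (real n + 1) / 2\<bar> \<le> real (n-3) ^ 2 / 2 ^ (n-3)"
    if "n \<ge> 4" for n :: nat
  proof -
    obtain k where n: "n = k+4" using \<open>n \<ge> 4\<close> by (metis add.commute le_Suc_ex)
    define x where "x = (2::real)^k"
    have xp: "x > 0" unfolding x_def by simp
    have e4: "(2::real) ^ (n-4) = x" and e3: "(2::real) ^ (n-3) = 2*x" unfolding x_def n by (simp_all add: numeral_eq_Suc)
    have rn: "real n = real k + 4" using n by simp
    have D: "2 * real n - 5 + 2 ^ (n - 3) = 2*real k+3+2*x" using e3 rn by simp
    have dp: "2*real k+3+2*x > 0" using xp by simp
    have av: "av1 (R_vertices n) (R_edges n) = (5*real k+7+(real k+5)*x)/(2*real k+3+2*x)"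
      unfolding n av_k x_def by simp
    have r1: "av1 (R_vertices n) (R_edges n)
              = (5 * real n - 13 + (real n + 1) * 2 ^ (n - 4)) / (2 * real n - 5 + 2 ^ (n - 3))"
      unfolding D e4 av rn using e3 by (simp add: algebra_simps)
    have r2: "av1 (R_vertices n) (R_edges n)
              = (real n + 1) / 2 - (real n ^ 2 - 13 / 2 * real n + 21 / 2) / (2 * real n - 5 + 2 ^ (n - 3))"
      unfolding D av rn using dp e3 by (simp add: field_simps power2_eq_square)
    have r3: "av1 (R_vertices n) (R_edges n)
              = real n / 2 + (2 ^ (n - 4) - real n ^ 2 + 15 / 2 * real n - 13) / (2 * real n - 5 + 2 ^ (n - 3))"
      unfolding D e4 av rn using dp e3 by (simp add: field_simps power2_eq_square)
    have r4: "av1 (R_vertices n) (R_edges n) < (real n + 1) / 2"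
    proof -
      have "2*(5*real k+7+(real k+5)*x) < (real k + 5) * (2*real k+3+2*x)"
        by (simp add: algebra_simps) (smt (verit) of_nat_0_le_iff mult_nonneg_nonneg)
      then show ?thesis unfolding av rn using dp by (simp add: field_simps)
    qed
    have r5: "n \<notin> {6, 7, 8} \<longrightarrow> av1 (R_vertices n) (R_edges n) > real n / 2"
    proof
      assume "n \<notin> {6,7,8}"
      then have k: "k = 0 \<or> k = 1 \<or> k \<ge> 5" using n by auto
      have "2*x > 2*real k^2 + real k - 2"
      proof -
        { assume "k \<ge> 5"
          then have "real (k^2 + k) \<le> real ((2::nat)^k)" using pow_ge by (simp only: of_nat_le_iff)
          then have "real k^2 + real k \<le> x" unfolding x_def by simp
          then have ?thesis by simp }
        then show ?thesis using k unfolding x_def by auto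
      qed
      then have "(real k + 4) * (2*real k+3+2*x) < 2*(5*real k+7+(real k+5)*x)"
        by (simp add: algebra_simps power2_eq_square)
      then show "av1 (R_vertices n) (R_edges n) > real n / 2" unfolding av rn using dp by (simp add: field_simps)
    qed
    have r6: "\<bar>av1 (R_vertices n) (R_edges n) - (real n + 1) / 2\<bar> \<le> real (n-3) ^ 2 / 2 ^ (n-3)"
    proof -
      have n3: "real (n-3) = real k + 1" using n by simp
      have "av1 (R_vertices n) (R_edges n) - (real n + 1) / 2 = - ((real k + 1)*(real k + 1/2)) / (2*real k+3+2*x)"
        unfolding av rn using dp by (simp add: field_simps)
      then have "\<bar>av1 (R_vertices n) (R_edges n) - (real n + 1) / 2\<bar> = ((real k + 1)*(real k + 1/2)) / (2*real k+3+2*x)"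
        using dp by simp
      also have "\<dots> \<le> ((real k + 1)*(real k + 1)) / (2*x)"
        by (rule frac_le) (use xp in auto)
      finally show ?thesis unfolding n3 e3 by (simp add: power2_eq_square)
    qed
    show ?thesis using r1 r2 r3 r4 r5 r6 by blast
  qed
  have L: "(\<lambda>n. av1 (R_vertices n) (R_edges n) - (real n + 1) / 2) \<longlonglongrightarrow> 0"
  proof (rule LIMSEQ_offset[where k=4])
    have g: "(\<lambda>m. real (m+1) ^ 2 / 2 ^ (m+1)) \<longlonglongrightarrow> 0"
      using LIMSEQ_ignore_initial_segment[OF g_lim, of 1] by simp
    show "(\<lambda>m. av1 (R_vertices (m+4)) (R_edges (m+4)) - (real (m+4) + 1) / 2) \<longlonglongrightarrow> 0"
    proof (rule tendsto_0_le[OF g, where K=1])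
      show "\<forall>\<^sub>F m in sequentially. norm (av1 (R_vertices (m+4)) (R_edges (m+4)) - (real (m+4) + 1) / 2) \<le> norm (real (m+1) ^ 2 / 2 ^ (m+1) :: real) * 1"
      proof (rule always_eventually, rule allI)
        fix m :: nat
        have h4: "m+4 \<ge> 4" by simp
        have "\<bar>av1 (R_vertices (m+4)) (R_edges (m+4)) - (real (m+4) + 1) / 2\<bar> \<le> real (m+4-3) ^ 2 / 2 ^ (m+4-3)"
          using P[OF h4] by blast
        moreover have "m + 4 - 3 = m+1" by simp
        ultimately show "norm (av1 (R_vertices (m+4)) (R_edges (m+4)) - (real (m+4) + 1) / 2) \<le> norm (real (m+1) ^ 2 / 2 ^ (m+1) :: real) * 1"
          by simp
      qed
    qed
  qed
  show ?thesis using P L by blast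
qed

end
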